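(* Let $A$ be a commutative ring over $\mathbf F_p$ with an action of a cyclic group $\langle\sigma\rangle$ of order $p$, let $N\cdot A=\{(1+\sigma+\dots+\sigma^{p-1})a: a\in A\}$ and $\mathrm{Nm}(a)=a\,\sigma(a)\cdots\sigma^{p-1}(a)$. Let $A'\subset A^\sigma$ be a subring containing $\mathrm{Nm}(A)$ and $N\cdot A$ (so $N\cdot A$ is an ideal of $A'$). Then every ring homomorphism $\chi\colon A'\to k$ that vanishes on $N\cdot A$ extends uniquely to a ring homomorphism $\tilde\chi\colon A\to k$, and this extension is given by $\tilde\chi(a)=\chi(\mathrm{Nm}(a))^{1/p}$.
   Context: $k$ is an algebraic closure of $\mathbf F_p$ (so $p$-th roots are unique); $A^\sigma$ denotes the $\sigma$-invariants of $A$. *)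

theory Defs
  imports "HOL-Computational_Algebra.Computational_Algebra"
begin

definition ring_hom_on :: "'a::comm_ring_1 set \<Rightarrow> ('a \<Rightarrow> 'b::comm_ring_1) \<Rightarrow> bool" where
  "ring_hom_on S f \<longleftrightarrow> f 1 = 1 \<and>
     (\<forall>x\<in>S. \<forall>y\<in>S. f (x + y) = f x + f y \<and> f (x * y) = f x * f y)"

definition is_subring :: "'a::comm_ring_1 set \<Rightarrow> bool" where
  "is_subring S \<longleftrightarrow> 0 \<in> S \<and> 1 \<in> S \<and>
     (\<forall>x\<in>S. \<forall>y\<in>S. x + y \<in> S \<and> x - y \<in> S \<and> x * y \<in> S)"

definition cyclic_action :: "nat \<Rightarrow> ('a::comm_ring_1 \<Rightarrow> 'a) \<Rightarrow> bool" where
  "cyclic_action p \<sigma> \<longleftrightarrow> bij \<sigma> \<and> \<sigma> 1 = 1 \<and>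
     (\<forall>x y. \<sigma> (x + y) = \<sigma> x + \<sigma> y \<and> \<sigma> (x * y) = \<sigma> x * \<sigma> y) \<and>
     (\<sigma> ^^ p) = id"

definition trace_N :: "nat \<Rightarrow> ('a::comm_ring_1 \<Rightarrow> 'a) \<Rightarrow> 'a \<Rightarrow> 'a" where
  "trace_N p \<sigma> a = (\<Sum>i<p. (\<sigma> ^^ i) a)"

definition Nm :: "nat \<Rightarrow> ('a::comm_ring_1 \<Rightarrow> 'a) \<Rightarrow> 'a \<Rightarrow> 'a" where
  "Nm p \<sigma> a = (\<Prod>i<p. (\<sigma> ^^ i) a)"

definition alg_closure_of_Fp :: "nat \<Rightarrow> 'k::alg_closed_field itself \<Rightarrow> bool" where
  "alg_closure_of_Fp p _ \<longleftrightarrow> of_nat p = (0::'k) \<and>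
     (\<forall>x::'k. \<exists>q::'k poly. q \<noteq> 0 \<and> (\<forall>i. coeff q i \<in> range of_nat) \<and> poly q x = 0)"

definition pth_root :: "nat \<Rightarrow> 'k::field \<Rightarrow> 'k" where
  "pth_root p y = (THE x. x ^ p = y)"

end

theory Submission imports Defs "HOL-Number_Theory.Cong" begin


lemma frob:
  fixes x y :: "'b::comm_ring_1"
  assumes p: "prime p" and c: "of_nat p = (0::'b)"
  shows "(x + y) ^ p = x ^ p + y ^ p"
proof -
  have p0: "p \<noteq> 0" using p by auto
  define f where "f = (\<lambda>k. of_nat (p choose k) * x ^ k * y ^ (p - k))"
  have "(x + y) ^ p = (\<Sum>k\<le>p. f k)" unfolding f_def by (rule binomial_ring)
  also have "\<dots> = (\<Sum>k\<in>{0,p}. f k)"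
  proof (rule sum.mono_neutral_right)
    show "\<forall>k\<in>{..p} - {0, p}. f k = 0"
    proof
      fix k assume k: "k \<in> {..p} - {0, p}"
      then have "p dvd (p choose k)" using dvd_choose_prime[of k p] p p0 by auto
      then obtain c' where "p choose k = p * c'" by blast
      then have "(of_nat (p choose k) :: 'b) = 0" using c by simp
      then show "f k = 0" by (simp add: f_def)
    qed
  qed auto
  also have "\<dots> = x ^ p + y ^ p" using p0 by (simp add: f_def)
  finally show ?thesis .
qed

lemma neg_pow_char:
  fixes x :: "'b::comm_ring_1"
  assumes p: "prime p" and c: "of_nat p = (0::'b)"
  shows "(- x) ^ p = - (x ^ p)"
proof -
  have "0 = (x + - x) ^ p" using p prime_gt_0_nat by (simp add: power_0_left)
  also have "\<dots> = x ^ p + (- x) ^ p" by (rule frob[OF p c])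
  finally show ?thesis by (simp add: eq_neg_iff_add_eq_0 add.commute)
qed

lemma root_unique:
  fixes x z :: "'b::field"
  assumes p: "prime p" and c: "of_nat p = (0::'b)" and e: "x ^ p = z ^ p"
  shows "x = z"
proof -
  have "(x + - z) ^ p = x ^ p + (- z) ^ p" by (rule frob[OF p c])
  also have "\<dots> = 0" using e neg_pow_char[OF p c, of z] by simp
  finally have "x + - z = 0" by simp
  then show ?thesis by (simp add: add_eq_0_iff2)
qed

lemma root_eq:
  fixes x y :: "'b::alg_closed_field"
  assumes p: "prime p" and c: "of_nat p = (0::'b)" and e: "x ^ p = y"
  shows "pth_root p y = x"
  unfolding pth_root_def
proof (rule the_equality)
  show "x ^ p = y" by (rule e)
  fix z assume "z ^ p = y" then show "z = x" using e root_unique[OF p c, of z x] by simp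
qed

lemma root_pow:
  fixes y :: "'b::alg_closed_field"
  assumes p: "prime p" and c: "of_nat p = (0::'b)"
  shows "pth_root p y ^ p = y"
proof -
  obtain x where "x ^ p = y" using nth_root_exists[of p y] p prime_gt_0_nat by blast
  then show ?thesis using root_eq[OF p c, of x y] by simp
qed

lemma root_add:
  fixes u v :: "'b::alg_closed_field"
  assumes p: "prime p" and c: "of_nat p = (0::'b)"
  shows "pth_root p (u + v) = pth_root p u + pth_root p v"
  by (rule root_eq[OF p c]) (simp add: frob[OF p c] root_pow[OF p c])

lemma root_mult:
  fixes u v :: "'b::alg_closed_field"
  assumes p: "prime p" and c: "of_nat p = (0::'b)"
  shows "pth_root p (u * v) = pth_root p u * pth_root p v"
  by (rule root_eq[OF p c]) (simp add: power_mult_distrib root_pow[OF p c])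



locale cyc =
  fixes p :: nat and \<sigma> :: "'a::comm_ring_1 \<Rightarrow> 'a"
  assumes prime: "prime p"
    and chr: "of_nat p = (0::'a)"
    and sadd: "\<And>x y. \<sigma> (x + y) = \<sigma> x + \<sigma> y"
    and smul: "\<And>x y. \<sigma> (x * y) = \<sigma> x * \<sigma> y"
    and sone: "\<sigma> 1 = 1"
    and per: "\<sigma> ^^ p = id"
begin

lemma p_pos: "p > 0" using prime prime_gt_0_nat by blast
lemma p_gt1: "p > 1" using prime prime_gt_1_nat by blast

lemma pw_add: "(\<sigma> ^^ j) (x + y) = (\<sigma> ^^ j) x + (\<sigma> ^^ j) y"
  by (induction j) (simp_all add: sadd)
lemma pw_mul: "(\<sigma> ^^ j) (x * y) = (\<sigma> ^^ j) x * (\<sigma> ^^ j) y"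
  by (induction j) (simp_all add: smul)
lemma pw_one: "(\<sigma> ^^ j) 1 = 1"
  by (induction j) (simp_all add: sone)
lemma pw_zero: "(\<sigma> ^^ j) 0 = 0"
  by (metis add.right_neutral add_left_cancel pw_add)
lemma pw_sum: "(\<sigma> ^^ j) (\<Sum>i\<in>S. f i) = (\<Sum>i\<in>S. (\<sigma> ^^ j) (f i))"
  by (induction S rule: infinite_finite_induct) (simp_all add: pw_zero pw_add)
lemma pw_prod: "(\<sigma> ^^ j) (\<Prod>i\<in>S. f i) = (\<Prod>i\<in>S. (\<sigma> ^^ j) (f i))"
  by (induction S rule: infinite_finite_induct) (simp_all add: pw_one pw_mul)
lemma pw_of_nat: "(\<sigma> ^^ j) (of_nat n) = of_nat n"
  by (induction n) (simp_all add: pw_zero pw_one pw_add)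

lemma pw_mod: "\<sigma> ^^ n = \<sigma> ^^ (n mod p)"
proof -
  have "\<sigma> ^^ n = \<sigma> ^^ (n mod p + p * (n div p))" by simp
  also have "\<dots> = \<sigma> ^^ (n mod p) \<circ> (\<sigma> ^^ p) ^^ (n div p)"
    by (simp only: funpow_add funpow_mult)
  also have "\<dots> = \<sigma> ^^ (n mod p)" by (simp add: per)
  finally show ?thesis .
qed

definition sh :: "nat \<Rightarrow> nat \<Rightarrow> nat" where "sh j i = (i + j) mod p"

lemma pw_comp: "(\<sigma> ^^ j) ((\<sigma> ^^ i) x) = (\<sigma> ^^ (sh j i)) x"
proof -
  have "(\<sigma> ^^ j) ((\<sigma> ^^ i) x) = (\<sigma> ^^ (j + i)) x" by (simp add: funpow_add)
  also have "\<dots> = (\<sigma> ^^ (sh j i)) x" unfolding sh_def by (subst pw_mod) (simp add: add.commute)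
  finally show ?thesis .
qed

lemma sh_lt: "sh j i < p" unfolding sh_def using p_pos by simp
lemma sh_sh: "sh j (sh k i) = sh (j + k) i"
  unfolding sh_def by (simp add: mod_add_left_eq mod_add_right_eq add.assoc add.commute add.left_commute)
lemma sh_id: "i < p \<Longrightarrow> sh p i = i" unfolding sh_def by simp
lemma sh_inv: "i < p \<Longrightarrow> j \<le> p \<Longrightarrow> sh (p - j) (sh j i) = i"
  by (simp add: sh_sh sh_id)
lemma sh_inv2: "i < p \<Longrightarrow> j \<le> p \<Longrightarrow> sh j (sh (p - j) i) = i"
  by (simp add: sh_sh sh_id)
lemma sh_inj: "j \<le> p \<Longrightarrow> inj_on (sh j) {..<p}"
  by (rule inj_on_inverseI[where g = "sh (p - j)"]) (simp add: sh_inv)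
lemma sh_surj: "j \<le> p \<Longrightarrow> sh j ` {..<p} = {..<p}"
proof
  show "sh j ` {..<p} \<subseteq> {..<p}" using sh_lt by auto
  assume j: "j \<le> p"
  show "{..<p} \<subseteq> sh j ` {..<p}"
  proof
    fix i assume "i \<in> {..<p}"
    then have "i = sh j (sh (p - j) i)" using sh_inv2 j by simp
    then show "i \<in> sh j ` {..<p}" using sh_lt by blast
  qed
qed
lemma sh_img_img: "S \<subseteq> {..<p} \<Longrightarrow> j \<le> p \<Longrightarrow> sh (p - j) ` sh j ` S = S"
  by (auto simp: image_image sh_inv subset_iff)
lemma sh_img_img2: "S \<subseteq> {..<p} \<Longrightarrow> j \<le> p \<Longrightarrow> sh j ` sh (p - j) ` S = S"
  by (auto simp: image_image sh_inv2 subset_iff)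
lemma sh_diff: "S \<subseteq> {..<p} \<Longrightarrow> j \<le> p \<Longrightarrow> sh j ` ({..<p} - S) = {..<p} - sh j ` S"
  using inj_on_image_set_diff[OF sh_inj, of j "{..<p}" S] sh_surj by simp
lemma sh_card: "S \<subseteq> {..<p} \<Longrightarrow> j \<le> p \<Longrightarrow> card (sh j ` S) = card S"
  by (meson card_image inj_on_subset sh_inj)

lemma prod_shift: "S \<subseteq> {..<p} \<Longrightarrow> j \<le> p \<Longrightarrow>
   (\<sigma> ^^ j) (\<Prod>i\<in>S. (\<sigma> ^^ i) a) = (\<Prod>i\<in>sh j ` S. (\<sigma> ^^ i) a)"
proof -
  assume S: "S \<subseteq> {..<p}" and j: "j \<le> p"
  have "(\<sigma> ^^ j) (\<Prod>i\<in>S. (\<sigma> ^^ i) a) = (\<Prod>i\<in>S. (\<sigma> ^^ (sh j i)) a)"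
    by (simp add: pw_prod pw_comp)
  also have "\<dots> = (\<Prod>i\<in>sh j ` S. (\<sigma> ^^ i) a)"
    using prod.reindex[of "sh j" S "\<lambda>i. (\<sigma> ^^ i) a"] inj_on_subset[OF sh_inj[OF j] S] by simp
  finally show ?thesis .
qed

definition T :: "'a \<Rightarrow> 'a \<Rightarrow> nat set \<Rightarrow> 'a" where
  "T a b S = (\<Prod>i\<in>S. (\<sigma> ^^ i) a) * (\<Prod>i\<in>{..<p} - S. (\<sigma> ^^ i) b)"

lemma T_shift: "S \<subseteq> {..<p} \<Longrightarrow> j \<le> p \<Longrightarrow> (\<sigma> ^^ j) (T a b S) = T a b (sh j ` S)"
  unfolding T_def pw_mul
  by (simp add: prod_shift sh_diff)

lemma tr_add: "trace_N p \<sigma> (x + y) = trace_N p \<sigma> x + trace_N p \<sigma> y"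
  unfolding trace_N_def by (simp add: pw_add sum.distrib)
lemma tr_sum: "finite K \<Longrightarrow> trace_N p \<sigma> (\<Sum>k\<in>K. f k) = (\<Sum>k\<in>K. trace_N p \<sigma> (f k))"
  by (induction K rule: finite_induct) (simp_all add: tr_add, simp add: trace_N_def pw_zero)
lemma tr_scal: "trace_N p \<sigma> (of_nat m * x) = of_nat m * trace_N p \<sigma> x"
  unfolding trace_N_def by (simp add: pw_mul pw_of_nat sum_distrib_left)

end


context cyc begin

lemma core:
  assumes F: "\<And>j S. j \<le> p \<Longrightarrow> S \<subseteq> {..<p} \<Longrightarrow> (\<sigma> ^^ j) (F S) = F (sh j ` S)"
    and k: "0 < k" "k < p"
  shows "\<exists>y. (\<Sum>S\<in>{S. S \<subseteq> {..<p} \<and> card S = k}. F S) = trace_N p \<sigma> y"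
proof -
  define P where "P = {S. S \<subseteq> {..<p} \<and> card S = k}"
  define P0 where "P0 = {S\<in>P. 0 \<in> S}"
  have finP: "finite P" unfolding P_def by (rule finite_subset[of _ "Pow {..<p}"]) auto
  have finP0: "finite P0" unfolding P0_def using finP by simp
  define z where "z = (\<Sum>S\<in>P0. F S)"
  have A: "(\<Sum>S\<in>P0. F (sh j ` S)) = (\<Sum>U\<in>{U\<in>P. j \<in> U}. F U)" if j: "j < p" for j
  proof (rule sum.reindex_bij_witness[where i="image (sh (p - j))" and j="image (sh j)"])
    fix S assume "S \<in> P0"
    then have S: "S \<subseteq> {..<p}" "card S = k" "0 \<in> S" unfolding P0_def P_def by auto
    show "sh (p - j) ` sh j ` S = S" using sh_img_img S j by simp
    have "sh j 0 = j" using j by (simp add: sh_def)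
    then show "sh j ` S \<in> {U \<in> P. j \<in> U}" using S sh_card[of S j] j sh_lt
      unfolding P_def by (auto intro: rev_image_eqI)
    show "F (sh j ` S) = F (sh j ` S)" by simp
  next
    fix U assume "U \<in> {U \<in> P. j \<in> U}"
    then have U: "U \<subseteq> {..<p}" "card U = k" "j \<in> U" unfolding P_def by auto
    show "sh j ` sh (p - j) ` U = U" using sh_img_img2 U j by simp
    have "sh (p - j) j = 0" using j by (simp add: sh_def)
    then show "sh (p - j) ` U \<in> P0" using U sh_card[of U "p - j"] sh_lt
      unfolding P0_def P_def by (auto intro: rev_image_eqI)
  qed
  have "trace_N p \<sigma> z = (\<Sum>j<p. \<Sum>S\<in>P0. F (sh j ` S))"
    unfolding trace_N_def z_def pw_sum
    by (rule sum.cong) (auto simp: P0_def P_def F)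
  also have "\<dots> = (\<Sum>j\<in>{..<p}. \<Sum>U\<in>{U. U \<in> P \<and> j \<in> U}. F U)"
    by (rule sum.cong) (auto simp: A)
  also have "\<dots> = (\<Sum>U\<in>P. \<Sum>j\<in>{j. j \<in> {..<p} \<and> j \<in> U}. F U)"
    by (rule sum.swap_restrict) (auto simp: finP)
  also have "\<dots> = (\<Sum>U\<in>P. of_nat k * F U)"
  proof (rule sum.cong)
    fix U assume "U \<in> P"
    then have "{j. j \<in> {..<p} \<and> j \<in> U} = U" "card U = k" unfolding P_def by auto
    then show "(\<Sum>j\<in>{j. j \<in> {..<p} \<and> j \<in> U}. F U) = of_nat k * F U" by simp
  qed simp
  finally have tz: "trace_N p \<sigma> z = of_nat k * (\<Sum>U\<in>P. F U)" by (simp add: sum_distrib_left)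
  have "coprime k p"
    using k prime by (metis coprime_commute nat_dvd_not_less prime_imp_coprime_nat)
  then obtain m where m: "[k * m = Suc 0] (mod p)" using cong_solve_coprime_nat by blast
  then have "(k * m) mod p = 1" using p_gt1 by (simp add: cong_def)
  then have "k * m = p * (k * m div p) + 1" by (metis div_mult_mod_eq add.commute mult.commute)
  then have km: "(of_nat (k * m) :: 'a) = 1"
    by (metis add.left_neutral chr mult_zero_left of_nat_1 of_nat_add of_nat_mult)
  have "trace_N p \<sigma> (of_nat m * z) = (\<Sum>U\<in>P. F U)"
  proof -
    have "trace_N p \<sigma> (of_nat m * z) = of_nat (k * m) * (\<Sum>U\<in>P. F U)"
      by (simp only: tr_scal tz of_nat_mult mult.assoc mult.left_commute[of "of_nat m"])
    then show ?thesis using km by simp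
  qed
  then show ?thesis unfolding P_def by metis
qed

end


context cyc begin

lemma split_pow:
  "(\<Sum>S\<in>Pow {..<p}. f S) = f {} + f {..<p} + (\<Sum>k\<in>{1..<p}. \<Sum>S\<in>{S. S \<subseteq> {..<p} \<and> card S = k}. f S)"
proof -
  have "(\<Sum>S\<in>Pow {..<p}. f S) = (\<Sum>k\<in>{..p}. \<Sum>S\<in>{S. S \<in> Pow {..<p} \<and> card S = k}. f S)"
    by (rule sum.group[symmetric]) (auto intro: card_mono[of "{..<p}", simplified])
  also have "{..p} = insert 0 (insert p {1..<p})" using p_pos by auto
  also have "(\<Sum>k\<in>insert 0 (insert p {1..<p}). \<Sum>S\<in>{S. S \<in> Pow {..<p} \<and> card S = k}. f S)
     = (\<Sum>S\<in>{S. S \<in> Pow {..<p} \<and> card S = 0}. f S) + ((\<Sum>S\<in>{S. S \<in> Pow {..<p} \<and> card S = p}. f S)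
        + (\<Sum>k\<in>{1..<p}. \<Sum>S\<in>{S. S \<in> Pow {..<p} \<and> card S = k}. f S))"
    using p_pos by (simp add: sum.insert)
  also have "{S. S \<in> Pow {..<p} \<and> card S = 0} = {{}}"
    by (auto dest: finite_subset)
  also have "{S. S \<in> Pow {..<p} \<and> card S = p} = {{..<p}}"
  proof -
    have "S = {..<p}" if "S \<subseteq> {..<p}" "card S = p" for S
      using card_subset_eq[of "{..<p}" S] that by simp
    then show ?thesis by auto
  qed
  finally show ?thesis by (simp add: add.assoc)
qed

lemma Nm_add: "\<exists>y. Nm p \<sigma> (a + b) = Nm p \<sigma> a + Nm p \<sigma> b + trace_N p \<sigma> y"
proof -
  have "\<forall>k\<in>{1..<p}. \<exists>y. (\<Sum>S\<in>{S. S \<subseteq> {..<p} \<and> card S = k}. T a b S) = trace_N p \<sigma> y"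
    by (auto intro!: core T_shift)
  then obtain y where y: "\<And>k. k \<in> {1..<p} \<Longrightarrow>
     (\<Sum>S\<in>{S. S \<subseteq> {..<p} \<and> card S = k}. T a b S) = trace_N p \<sigma> (y k)" by metis
  have "Nm p \<sigma> (a + b) = (\<Prod>i<p. (\<sigma> ^^ i) a + (\<sigma> ^^ i) b)" unfolding Nm_def by (simp add: pw_add)
  also have "\<dots> = (\<Sum>S\<in>Pow {..<p}. T a b S)" unfolding T_def by (rule prod_add) simp
  also have "\<dots> = Nm p \<sigma> b + Nm p \<sigma> a + (\<Sum>k\<in>{1..<p}. trace_N p \<sigma> (y k))"
  proof -
    have "(\<Sum>k\<in>{1..<p}. \<Sum>S\<in>{S. S \<subseteq> {..<p} \<and> card S = k}. T a b S) = (\<Sum>k\<in>{1..<p}. trace_N p \<sigma> (y k))"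
      by (rule sum.cong) (simp_all add: y)
    moreover have "T a b {} = Nm p \<sigma> b" "T a b {..<p} = Nm p \<sigma> a" by (simp_all add: T_def Nm_def)
    ultimately show ?thesis unfolding split_pow by simp
  qed
  also have "\<dots> = Nm p \<sigma> a + Nm p \<sigma> b + trace_N p \<sigma> (\<Sum>k\<in>{1..<p}. y k)"
    by (simp add: tr_sum add.commute)
  finally show ?thesis by blast
qed

lemma Nm_mult: "Nm p \<sigma> (a * b) = Nm p \<sigma> a * Nm p \<sigma> b"
  unfolding Nm_def by (simp add: pw_mul prod.distrib)

lemma Nm_one: "Nm p \<sigma> 1 = 1"
  unfolding Nm_def by (simp add: pw_one)

lemma zero_exp: "\<exists>y. 0 = (- a) ^ p + Nm p \<sigma> a + (\<Sum>k\<in>{1..<p}. trace_N p \<sigma> (y k) * (- a) ^ (p - k))"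
proof -
  define G where "G = (\<lambda>S. \<Prod>i\<in>S. (\<sigma> ^^ i) a)"
  have "\<forall>k\<in>{1..<p}. \<exists>y. (\<Sum>S\<in>{S. S \<subseteq> {..<p} \<and> card S = k}. G S) = trace_N p \<sigma> y"
    unfolding G_def by (auto intro!: core prod_shift)
  then obtain y where y: "\<And>k. k \<in> {1..<p} \<Longrightarrow>
     (\<Sum>S\<in>{S. S \<subseteq> {..<p} \<and> card S = k}. G S) = trace_N p \<sigma> (y k)" by metis
  have "0 = (\<Prod>i<p. (\<sigma> ^^ i) a + (- a))"
    using p_pos by (intro prod_zero[symmetric]) (auto intro!: bexI[of _ 0])
  also have "\<dots> = (\<Sum>S\<in>Pow {..<p}. G S * (\<Prod>i\<in>{..<p} - S. - a))" unfolding G_def by (rule prod_add) simp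
  also have "\<dots> = (- a) ^ p + Nm p \<sigma> a + (\<Sum>k\<in>{1..<p}. \<Sum>S\<in>{S. S \<subseteq> {..<p} \<and> card S = k}. G S * (- a) ^ (p - k))"
    unfolding split_pow
  proof -
    have "\<And>k. (\<Sum>S\<in>{S. S \<subseteq> {..<p} \<and> card S = k}. G S * (\<Prod>i\<in>{..<p} - S. - a))
        = (\<Sum>S\<in>{S. S \<subseteq> {..<p} \<and> card S = k}. G S * (- a) ^ (p - k))"
      by (rule sum.cong) (auto simp: card_Diff_subset finite_subset[OF _ finite_lessThan])
    then show "G {} * (\<Prod>i\<in>{..<p} - {}. - a) + G {..<p} * (\<Prod>i\<in>{..<p} - {..<p}. - a) +
      (\<Sum>k = 1..<p. \<Sum>S\<in>{S. S \<subseteq> {..<p} \<and> card S = k}. G S * (\<Prod>i\<in>{..<p} - S. - a)) =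
      (- a) ^ p + Nm p \<sigma> a + (\<Sum>k = 1..<p. \<Sum>S\<in>{S. S \<subseteq> {..<p} \<and> card S = k}. G S * (- a) ^ (p - k))"
      by (simp add: G_def Nm_def)
  qed
  also have "\<dots> = (- a) ^ p + Nm p \<sigma> a + (\<Sum>k\<in>{1..<p}. trace_N p \<sigma> (y k) * (- a) ^ (p - k))"
    by (simp add: y sum_distrib_right[symmetric])
  finally show ?thesis by blast
qed

end


lemma hom_facts:
  fixes f :: "'a::comm_ring_1 \<Rightarrow> 'b::comm_ring_1"
  assumes "ring_hom_on UNIV f"
  shows "f 0 = 0" "\<And>x. f (- x) = - f x" "\<And>x n. f (x ^ n) = f x ^ n"
    "\<And>g (K::'c set). f (\<Sum>k\<in>K. g k) = (\<Sum>k\<in>K. f (g k))"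
    "\<And>x y. f (x + y) = f x + f y" "\<And>x y. f (x * y) = f x * f y"
proof -
  have ad: "\<And>x y. f (x + y) = f x + f y" and mu: "\<And>x y. f (x * y) = f x * f y" and o: "f 1 = 1"
    using assms unfolding ring_hom_on_def by auto
  show z: "f 0 = 0" by (metis ad add.right_neutral add_left_cancel)
  show "\<And>x. f (- x) = - f x" by (metis ad z add.right_inverse eq_neg_iff_add_eq_0)
  show "\<And>x n. f (x ^ n) = f x ^ n" by (induct_tac n) (simp_all add: o mu)
  show "\<And>g (K::'c set). f (\<Sum>k\<in>K. g k) = (\<Sum>k\<in>K. f (g k))"
    subgoal for g K by (induction K rule: infinite_finite_induct) (simp_all add: z ad)
    done
  show "\<And>x y. f (x + y) = f x + f y" "\<And>x y. f (x * y) = f x * f y" by (fact ad, fact mu)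
qed

theorem lemma5p16:
  fixes p :: nat
    and \<sigma> :: "'a::comm_ring_1 \<Rightarrow> 'a"
    and A' :: "'a set"
    and \<chi> :: "'a \<Rightarrow> 'k::alg_closed_field"
  assumes "prime p"
    and "of_nat p = (0::'a)"
    and "alg_closure_of_Fp p TYPE('k)"
    and "cyclic_action p \<sigma>"
    and "is_subring A'"
    and "A' \<subseteq> {a. \<sigma> a = a}"
    and "\<forall>a. Nm p \<sigma> a \<in> A'"
    and "\<forall>a. trace_N p \<sigma> a \<in> A'"
    and "ring_hom_on A' \<chi>"
    and "\<forall>a. \<chi> (trace_N p \<sigma> a) = 0"
  shows "ring_hom_on UNIV (\<lambda>a. pth_root p (\<chi> (Nm p \<sigma> a)))
     \<and> (\<forall>x\<in>A'. pth_root p (\<chi> (Nm p \<sigma> x)) = \<chi> x)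
     \<and> (\<forall>\<psi> :: 'a \<Rightarrow> 'k. ring_hom_on UNIV \<psi> \<and> (\<forall>x\<in>A'. \<psi> x = \<chi> x)
          \<longrightarrow> \<psi> = (\<lambda>a. pth_root p (\<chi> (Nm p \<sigma> a))))"
proof -
  note p = assms(1)
  interpret cyc p \<sigma>
    using assms(1,2,4) unfolding cyclic_action_def by unfold_locales auto
  have ck: "of_nat p = (0::'k)" using assms(3) unfolding alg_closure_of_Fp_def by simp
  have sub: "0 \<in> A'" "1 \<in> A'" "\<And>x y. x \<in> A' \<Longrightarrow> y \<in> A' \<Longrightarrow> x + y \<in> A'"
     "\<And>x y. x \<in> A' \<Longrightarrow> y \<in> A' \<Longrightarrow> x * y \<in> A'"
    using assms(5) unfolding is_subring_def by auto
  have c1: "\<chi> 1 = 1" and cad: "\<And>x y. x \<in> A' \<Longrightarrow> y \<in> A' \<Longrightarrow> \<chi> (x + y) = \<chi> x + \<chi> y"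
    and cmu: "\<And>x y. x \<in> A' \<Longrightarrow> y \<in> A' \<Longrightarrow> \<chi> (x * y) = \<chi> x * \<chi> y"
    using assms(9) unfolding ring_hom_on_def by auto
  have NA: "\<And>a. Nm p \<sigma> a \<in> A'" and TA: "\<And>a. trace_N p \<sigma> a \<in> A'"
    and T0: "\<And>a. \<chi> (trace_N p \<sigma> a) = 0" using assms(7,8,10) by auto
  have P1: "ring_hom_on UNIV (\<lambda>a. pth_root p (\<chi> (Nm p \<sigma> a)))"
    unfolding ring_hom_on_def
  proof (intro conjI ballI)
    show "pth_root p (\<chi> (Nm p \<sigma> 1)) = 1"
      using root_eq[OF p ck, of 1 1] by (simp add: Nm_one c1)
  next
    fix x y :: 'a
    obtain y0 where y0: "Nm p \<sigma> (x + y) = Nm p \<sigma> x + Nm p \<sigma> y + trace_N p \<sigma> y0"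
      using Nm_add by blast
    have "\<chi> (Nm p \<sigma> (x + y)) = \<chi> (Nm p \<sigma> x) + \<chi> (Nm p \<sigma> y)"
      unfolding y0 by (simp add: cad sub NA TA T0)
    then show "pth_root p (\<chi> (Nm p \<sigma> (x + y))) = pth_root p (\<chi> (Nm p \<sigma> x)) + pth_root p (\<chi> (Nm p \<sigma> y))"
      by (simp add: root_add[OF p ck])
    show "pth_root p (\<chi> (Nm p \<sigma> (x * y))) = pth_root p (\<chi> (Nm p \<sigma> x)) * pth_root p (\<chi> (Nm p \<sigma> y))"
      by (simp add: Nm_mult cmu NA root_mult[OF p ck])
  qed
  have P2: "\<forall>x\<in>A'. pth_root p (\<chi> (Nm p \<sigma> x)) = \<chi> x"
  proof
    fix x assume x: "x \<in> A'"
    then have sx: "\<sigma> x = x" using assms(6) by auto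
    have "(\<sigma> ^^ i) x = x" for i by (induction i) (simp_all add: sx)
    then have "Nm p \<sigma> x = x ^ p" by (simp add: Nm_def)
    moreover have "x ^ n \<in> A' \<and> \<chi> (x ^ n) = \<chi> x ^ n" for n
      by (induction n) (simp_all add: sub c1 cmu x)
    ultimately show "pth_root p (\<chi> (Nm p \<sigma> x)) = \<chi> x" using root_eq[OF p ck] by simp
  qed
  have P3: "\<psi> = (\<lambda>a. pth_root p (\<chi> (Nm p \<sigma> a)))"
    if h: "ring_hom_on UNIV \<psi>" and e: "\<forall>x\<in>A'. \<psi> x = \<chi> x" for \<psi> :: "'a \<Rightarrow> 'k"
  proof
    fix a
    note hf = hom_facts[OF h]
    obtain y where y: "0 = (- a) ^ p + Nm p \<sigma> a + (\<Sum>k\<in>{1..<p}. trace_N p \<sigma> (y k) * (- a) ^ (p - k))"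
      using zero_exp by blast
    have "0 = \<psi> ((- a) ^ p + Nm p \<sigma> a + (\<Sum>k\<in>{1..<p}. trace_N p \<sigma> (y k) * (- a) ^ (p - k)))"
      by (metis y hf(1))
    also have "\<dots> = - (\<psi> a ^ p) + \<chi> (Nm p \<sigma> a)"
      by (simp add: hf e NA TA T0 neg_pow_char[OF p ck])
    finally have "\<psi> a ^ p = \<chi> (Nm p \<sigma> a)" by (simp add: eq_neg_iff_add_eq_0 add.commute)
    then show "\<psi> a = pth_root p (\<chi> (Nm p \<sigma> a))" using root_eq[OF p ck, of "\<psi> a"] by simp
  qed
  show ?thesis using P1 P2 P3 by blast
qed

end
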